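(* Let $\mathbb{X}$ be a finite-dimensional real polyhedral Banach space. If a bijective operator $T\in\mathbb{L}(\mathbb{X})$ preserves parallel pairs (or TEA pairs), then $T$ maps each non-zero non-smooth point of $\mathbb{X}$ to a non-smooth point of $\mathbb{X}$.
   Context: A finite-dimensional Banach space is polyhedral if its unit ball has finitely many extreme points. For non-zero $x$, $J(x)=\{f\in S_{\mathbb{X}^*}: f(x)=\|x\|\}$; $x$ is smooth if $J(x)$ is a singleton. $(x,y)$ is a parallel pair if $\|x+\lambda y\|=\|x\|+\|y\|$ for some $\lambda$ with $|\lambda|=1$; a TEA pair if $\|x+y\|=\|x\|+\|y\|$. $T$ preserves parallel (resp. TEA) pairs if $(x,y)$ parallel (resp. TEA) implies $(Tx,Ty)$ parallel (resp. TEA). *)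

theory Defs
  imports "HOL-Analysis.Analysis"
begin

definition fin_dim_space :: "'a::real_normed_vector itself \<Rightarrow> bool" where
  "fin_dim_space _ \<longleftrightarrow> (\<exists>B::'a set. finite B \<and> span B = UNIV)"

definition polyhedral_space :: "'a::real_normed_vector itself \<Rightarrow> bool" where
  "polyhedral_space _ \<longleftrightarrow> finite {x::'a. x extreme_point_of (cball 0 1)}"

definition Jset :: "'a::real_normed_vector \<Rightarrow> ('a \<Rightarrow> real) set" where
  "Jset x = {f. bounded_linear f \<and> onorm f = 1 \<and> f x = norm x}"

definition smooth_point :: "'a::real_normed_vector \<Rightarrow> bool" where
  "smooth_point x \<longleftrightarrow> (\<exists>!f. f \<in> Jset x)"

definition parallel_pair :: "'a::real_normed_vector \<Rightarrow> 'a \<Rightarrow> bool" where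
  "parallel_pair x y \<longleftrightarrow> (\<exists>c::real. \<bar>c\<bar> = 1 \<and> norm (x + c *\<^sub>R y) = norm x + norm y)"

definition TEA_pair :: "'a::real_normed_vector \<Rightarrow> 'a \<Rightarrow> bool" where
  "TEA_pair x y \<longleftrightarrow> norm (x + y) = norm x + norm y"

definition preserves_parallel :: "('a::real_normed_vector \<Rightarrow> 'a) \<Rightarrow> bool" where
  "preserves_parallel T \<longleftrightarrow> (\<forall>x y. parallel_pair x y \<longrightarrow> parallel_pair (T x) (T y))"

definition preserves_TEA :: "('a::real_normed_vector \<Rightarrow> 'a) \<Rightarrow> bool" where
  "preserves_TEA T \<longleftrightarrow> (\<forall>x y. TEA_pair x y \<longrightarrow> TEA_pair (T x) (T y))"

end

theory Submission
  imports Defs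
begin

definition dimA :: "'a::real_vector itself \<Rightarrow> nat" where
  "dimA _ = max 1 (dim (UNIV::'a set))"

typedef (overloaded) ('a::real_vector) idx = "{..< dimA TYPE('a)}"
  by (rule exI[of _ 0]) (simp add: dimA_def)

instance idx :: (real_vector) finite
proof
  show "finite (UNIV :: 'a idx set)"
    by (metis Abs_idx_cases finite_lessThan finite_imageI finite_subset image_eqI subsetI)
qed

lemma card_idx: "CARD('a::real_vector idx) = dimA TYPE('a)"
  using type_definition.card[OF type_definition_idx] by simp

lemma exists_iso:
  fixes x :: "'a::real_normed_vector"
  assumes "fin_dim_space TYPE('a)" "x \<noteq> 0"
  shows "\<exists>L::'a \<Rightarrow> real^('a idx). linear L \<and> bij L"
proof -
  obtain B0 :: "'a set" where B0: "finite B0" "span B0 = UNIV"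
    using assms(1) unfolding fin_dim_space_def by blast
  obtain B :: "'a set" where B: "independent B" "UNIV \<subseteq> span B" "card B = dim (UNIV::'a set)"
    using basis_exists[of "UNIV::'a set"] by blast
  have fB: "finite B" using independent_span_bound[OF B0(1) B(1)] B0(2) by auto
  have "B \<noteq> {}" using B(2) assms(2) by auto
  then have "card B \<ge> 1" using fB by (simp add: Suc_leI card_gt_0_iff)
  then have d: "dimA TYPE('a) = dim (UNIV::'a set)" using B(3) by (simp add: dimA_def)
  have dE: "dim (UNIV::(real^('a idx)) set) = dim (UNIV::'a set)"
    by (simp add: card_idx d)
  have cE: "card (Basis::(real^('a idx)) set) = dim (UNIV::(real^('a idx)) set)"
    by simp
  obtain f :: "'a \<Rightarrow> real^('a idx)" where f: "linear f" "f ` UNIV = UNIV" "inj_on f UNIV"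
    using finite_basis_to_basis_subspace_isomorphism[OF subspace_UNIV subspace_UNIV dE[symmetric] fB
        _ B(1) B(2) _ finite_Basis _ independent_Basis _ cE] B(3)
    by (auto simp: span_Basis)
  then show ?thesis by (auto simp: bij_def)
qed


lemma ex_pos_at_right:
  assumes "eventually P (at_right (a::real))"
  shows "\<exists>t>a. P t"
proof -
  obtain b where "b > a" "\<forall>y>a. y < b \<longrightarrow> P y" using assms eventually_at_right_field by blast
  then show ?thesis by (intro exI[of _ "(a+b)/2"]) auto
qed

lemma poly_rep:
  fixes x :: "'a::real_normed_vector"
  assumes fd: "fin_dim_space TYPE('a)" and ph: "polyhedral_space TYPE('a)" and x: "x \<noteq> 0"
  shows "\<exists>F::('a \<Rightarrow> real) set. finite F \<and> F \<noteq> {} \<and> (\<forall>\<phi>\<in>F. linear \<phi>) \<and> (\<forall>y. norm y = Max ((\<lambda>\<phi>. \<phi> y) ` F))"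
proof -
  obtain L :: "'a \<Rightarrow> real^('a idx)" where L: "linear L" "bij L" using exists_iso[OF fd x] by blast
  obtain M where M: "linear M" "M \<circ> L = id"
    using linear_injective_left_inverse[OF L(1)] bij_is_inj[OF L(2)] by blast
  have invML[simp]: "M (L y) = y" for y using M(2) by (metis comp_apply id_apply)
  have invLM[simp]: "L (M e) = e" for e
    using L(2) by (metis invML bij_pointE)
  have Mbl: "bounded_linear M" using M(1) linear_conv_bounded_linear by auto
  define N where "N e = norm (M e)" for e
  define BN where "BN = {e. N e \<le> 1}"
  have Nscale: "N (c *\<^sub>R e) = \<bar>c\<bar> * N e" for c e
    by (simp add: N_def linear_scale[OF M(1)])
  have NL[simp]: "N (L y) = norm y" for y by (simp add: N_def)
  have contN: "continuous_on UNIV N"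
    unfolding N_def by (intro continuous_intros linear_continuous_on Mbl)
  have closedBN: "closed BN" unfolding BN_def
    by (rule closed_Collect_le[OF contN continuous_on_const])
  have BNimg: "BN = L ` cball 0 1"
  proof
    show "BN \<subseteq> L ` cball 0 1"
    proof
      fix e assume "e \<in> BN"
      then have "M e \<in> cball 0 1" by (simp add: BN_def N_def)
      then show "e \<in> L ` cball 0 1" by (metis invLM image_eqI)
    qed
    show "L ` cball 0 1 \<subseteq> BN" by (auto simp: BN_def)
  qed
  have convBN: "convex BN" unfolding BNimg
    by (rule convex_linear_image[OF L(1) convex_cball])
  obtain i :: "'a idx" where True by blast
  have sne: "sphere (0::real^('a idx)) 1 \<noteq> {}"
  proof -
    have "(axis i 1 :: real^('a idx)) \<in> sphere 0 1" by simp
    then show ?thesis by blast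
  qed
  obtain e0 where e0: "e0 \<in> sphere (0::real^('a idx)) 1" "\<forall>e\<in>sphere 0 1. N e0 \<le> N e"
    using continuous_attains_inf[OF compact_sphere sne continuous_on_subset[OF contN]] by blast
  define m where "m = N e0"
  have mpos: "m > 0"
  proof -
    have "M e0 \<noteq> 0"
    proof
      assume "M e0 = 0"
      then have "e0 = L 0" by (metis invLM)
      then have "e0 = 0" using linear_0[OF L(1)] by simp
      then show False using e0(1) by simp
    qed
    then show ?thesis by (simp add: m_def N_def)
  qed
  have mle: "m * norm e \<le> N e" for e
  proof (cases "e = 0")
    case True then show ?thesis by (simp add: N_def)
  next
    case False
    have "(inverse (norm e)) *\<^sub>R e \<in> sphere 0 1" using False by (simp add: norm_sgn)
    then have "m \<le> N ((inverse (norm e)) *\<^sub>R e)" using e0(2) m_def by blast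
    also have "\<dots> = N e / norm e" using False by (simp add: Nscale divide_inverse mult.commute)
    finally show ?thesis using False by (simp add: field_simps)
  qed
  have bndBN: "bounded BN"
  proof -
    have "BN \<subseteq> cball 0 (1/m)"
    proof
      fix e assume "e \<in> BN"
      then have "m * norm e \<le> 1" using mle[of e] by (simp add: BN_def)
      then show "e \<in> cball 0 (1/m)" using mpos by (simp add: field_simps)
    qed
    then show ?thesis using bounded_cball bounded_subset by blast
  qed
  have compBN: "compact BN" using bndBN closedBN compact_eq_bounded_closed by blast
  have extsub: "{e. e extreme_point_of BN} \<subseteq> L ` {y. y extreme_point_of cball 0 1}"
  proof
    fix e assume "e \<in> {e. e extreme_point_of BN}"
    then have ex: "e extreme_point_of BN" by simp
    have "M e extreme_point_of cball 0 1"
      unfolding extreme_point_of_def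
    proof (intro conjI ballI)
      show "M e \<in> cball 0 1" using ex by (simp add: extreme_point_of_def BN_def N_def)
      fix a b assume ab: "a \<in> cball (0::'a) 1" "b \<in> cball (0::'a) 1"
      show "M e \<notin> open_segment a b"
      proof
        assume seg: "M e \<in> open_segment a b"
        have "a \<noteq> b \<and> (\<exists>u. 0 < u \<and> u < 1 \<and> M e = (1 - u) *\<^sub>R a + u *\<^sub>R b)"
          using seg by (simp add: in_segment)
        then obtain u where u: "0 < u" "u < 1" "M e = (1 - u) *\<^sub>R a + u *\<^sub>R b" "a \<noteq> b"
          by blast
        have "L (M e) = L ((1 - u) *\<^sub>R a + u *\<^sub>R b)" using u(3) by simp
        then have "e = (1 - u) *\<^sub>R L a + u *\<^sub>R L b"
          by (simp add: linear_add[OF L(1)] linear_scale[OF L(1)])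
        moreover have "L a \<noteq> L b" using u(4) by (metis invML)
        ultimately have "e \<in> open_segment (L a) (L b)" using u by (auto simp: in_segment)
        moreover have "L a \<in> BN" "L b \<in> BN" using ab BNimg by auto
        ultimately show False using ex by (auto simp: extreme_point_of_def)
      qed
    qed
    then show "e \<in> L ` {y. y extreme_point_of cball 0 1}" by (metis invLM image_eqI mem_Collect_eq)
  qed
  have finext: "finite {e. e extreme_point_of BN}"
  proof -
    have "finite (L ` {y. y extreme_point_of cball (0::'a) 1})"
      using ph by (simp add: polyhedral_space_def)
    then show ?thesis using extsub by (rule finite_subset[rotated])
  qed
  have "polytope BN" unfolding polytope_def
    using Krein_Milman_Minkowski[OF compBN convBN] finext by blast
  then have "polyhedron BN" by (rule polytope_imp_polyhedron)
  then obtain H where H: "finite H" "BN = \<Inter>H" "\<forall>h\<in>H. \<exists>a b. a \<noteq> 0 \<and> h = {e. a \<bullet> e \<le> b}"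
    unfolding polyhedron_def by blast
  obtain A where A: "\<forall>h\<in>H. \<exists>b. A h \<noteq> 0 \<and> h = {e. A h \<bullet> e \<le> b}"
    using bchoice[OF H(3)] by blast
  obtain Bv where AB: "\<forall>h\<in>H. A h \<noteq> 0 \<and> h = {e. A h \<bullet> e \<le> Bv h}"
    using bchoice[OF A] by blast
  obtain K where K: "K > 0" "\<forall>e. norm (M e) \<le> norm e * K"
    using bounded_linear.pos_bounded[OF Mbl] by blast
  have Bpos: "Bv h > 0" if h: "h \<in> H" for h
  proof -
    define a where "a = A h"
    have a0: "a \<noteq> 0" using AB h a_def by auto
    define e where "e = (1 / (K * norm a)) *\<^sub>R a"
    have "N e \<le> norm e * K" using K(2) by (simp add: N_def)
    also have "\<dots> = 1" using a0 K(1) by (simp add: e_def)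
    finally have "e \<in> BN" by (simp add: BN_def)
    then have "e \<in> h" using H(2) h by blast
    then have "a \<bullet> e \<le> Bv h" using AB h a_def by auto
    moreover have "a \<bullet> e = norm a / K" using a0 K(1)
      by (simp add: e_def power2_norm_eq_inner[symmetric] power2_eq_square)
    moreover have "norm a / K > 0" using a0 K(1) by simp
    ultimately show ?thesis by linarith
  qed
  have Hne: "H \<noteq> {}"
  proof
    assume "H = {}"
    then have "BN = UNIV" using H(2) by simp
    then show False using bndBN not_bounded_UNIV by metis
  qed
  define F where "F = (\<lambda>h. \<lambda>y. (A h \<bullet> L y) / Bv h) ` H"
  have linF: "\<forall>\<phi>\<in>F. linear \<phi>"
  proof
    fix \<phi> assume "\<phi> \<in> F"
    then obtain h where h: "\<phi> = (\<lambda>y. (A h \<bullet> L y) / Bv h)" unfolding F_def by blast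
    show "linear \<phi>" unfolding h
      by (rule linearI) (simp_all add: linear_add[OF L(1)] linear_scale[OF L(1)] inner_add_right add_divide_distrib)
  qed
  have upper: "(A h \<bullet> L y) / Bv h \<le> norm y" if h: "h \<in> H" for h y
  proof (cases "y = 0")
    case True then show ?thesis using linear_0[OF L(1)] by simp
  next
    case False
    define u where "u = (inverse (norm y)) *\<^sub>R L y"
    have "N u = 1" using False by (simp add: u_def Nscale)
    then have "u \<in> h" using H(2) h by (auto simp: BN_def)
    then have "A h \<bullet> u \<le> Bv h" using AB h by auto
    then have "(A h \<bullet> L y) / norm y \<le> Bv h" using False by (simp add: u_def divide_inverse mult.commute)
    then show ?thesis using False Bpos[OF h] by (simp add: field_simps)
  qed
  have attained: "\<exists>h\<in>H. (A h \<bullet> L y) / Bv h = norm y" for y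
  proof (cases "y = 0")
    case True then show ?thesis using linear_0[OF L(1)] Hne by auto
  next
    case False
    show ?thesis
    proof (rule ccontr)
      assume nat: "\<not> ?thesis"
      define u where "u = (inverse (norm y)) *\<^sub>R L y"
      have Nu: "N u = 1" using False by (simp add: u_def Nscale)
      have strict: "A h \<bullet> u < Bv h" if h: "h \<in> H" for h
      proof -
        have "(A h \<bullet> L y) / Bv h < norm y" using upper[OF h, of y] nat h by force
        then have "A h \<bullet> L y < Bv h * norm y" using Bpos[OF h] by (simp add: field_simps)
        then show ?thesis using False by (simp add: u_def field_simps)
      qed
      have "eventually (\<lambda>t. \<forall>h\<in>H. A h \<bullet> (t *\<^sub>R u) < Bv h) (at_right 1)"
      proof (rule eventually_ball_finite[OF H(1)], rule ballI)
        fix h assume h: "h \<in> H"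
        have "((\<lambda>t. t * (A h \<bullet> u)) \<longlongrightarrow> 1 * (A h \<bullet> u)) (at_right 1)"
          by (intro tendsto_intros)
        then have "eventually (\<lambda>t. t * (A h \<bullet> u) < Bv h) (at_right 1)"
          using strict[OF h] by (intro order_tendstoD(2)) auto
        then show "eventually (\<lambda>t. A h \<bullet> (t *\<^sub>R u) < Bv h) (at_right 1)" by simp
      qed
      then obtain t where t: "t > 1" "\<forall>h\<in>H. A h \<bullet> (t *\<^sub>R u) < Bv h"
        using ex_pos_at_right by blast
      have "t *\<^sub>R u \<in> h" if h: "h \<in> H" for h
      proof -
        have eq: "h = {e. A h \<bullet> e \<le> Bv h}" using AB h by blast
        have "A h \<bullet> (t *\<^sub>R u) \<le> Bv h" using t(2) h by (simp add: less_imp_le)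
        then have "t *\<^sub>R u \<in> {e. A h \<bullet> e \<le> Bv h}" by simp
        then show ?thesis using eq by metis
      qed
      then have "t *\<^sub>R u \<in> BN" using H(2) by blast
      then have "N (t *\<^sub>R u) \<le> 1" by (simp add: BN_def)
      then show False using t(1) Nu by (simp add: Nscale)
    qed
  qed
  have "norm y = Max ((\<lambda>\<phi>. \<phi> y) ` F)" for y
  proof -
    obtain h where h: "h \<in> H" "(A h \<bullet> L y) / Bv h = norm y" using attained by blast
    show ?thesis
    proof (rule sym, rule Max_eqI)
      show "finite ((\<lambda>\<phi>. \<phi> y) ` F)" using H(1) by (simp add: F_def)
      show "z \<le> norm y" if "z \<in> (\<lambda>\<phi>. \<phi> y) ` F" for z using that upper by (auto simp: F_def)
      have "(\<lambda>y. (A h \<bullet> L y) / Bv h) \<in> F" using h(1) by (simp add: F_def)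
      then show "norm y \<in> (\<lambda>\<phi>. \<phi> y) ` F" using h(2) by (metis (no_types, lifting) image_eqI)
    qed
  qed
  moreover have "finite F" using H(1) by (simp add: F_def)
  moreover have "F \<noteq> {}" using Hne by (simp add: F_def)
  moreover note linF
  ultimately have "finite F \<and> F \<noteq> {} \<and> (\<forall>\<phi>\<in>F. linear \<phi>) \<and> (\<forall>y. norm y = Max ((\<lambda>\<phi>. \<phi> y) ` F))"
    by blast
  then show ?thesis by (rule exI)
qed


lemma ev_lin:
  fixes a b :: real
  assumes "a > 0 \<or> (a = 0 \<and> b > 0)"
  shows "eventually (\<lambda>s. 0 < a + s * b) (at_right 0)"
  using assms
proof
  assume a: "a > 0"
  have "((\<lambda>s. a + s * b) \<longlongrightarrow> a + 0 * b) (at_right 0)" by (intro tendsto_intros)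
  then show ?thesis using a by (intro order_tendstoD(1)) auto
next
  assume ab: "a = 0 \<and> b > 0"
  have "eventually (\<lambda>s::real. s > 0) (at_right 0)" by (simp add: eventually_at_right_less)
  then show ?thesis by eventually_elim (use ab in simp)
qed

locale nrep =
  fixes F :: "('a::real_normed_vector \<Rightarrow> real) set"
  assumes finF: "finite F" and neF: "F \<noteq> {}" and linF: "\<And>\<phi>. \<phi> \<in> F \<Longrightarrow> linear \<phi>"
    and nrm: "\<And>y. norm y = Max ((\<lambda>\<phi>. \<phi> y) ` F)"
begin

definition act :: "'a \<Rightarrow> ('a \<Rightarrow> real) set" where
  "act y = {\<phi>\<in>F. \<phi> y = norm y}"

definition U :: "'a \<Rightarrow> ('a \<Rightarrow> real) \<Rightarrow> bool" where
  "U z \<phi> \<longleftrightarrow> \<phi> \<in> F \<and> (\<forall>\<theta>\<in>F-{\<phi>}. \<theta> z < \<phi> z)"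

lemma le_norm: "\<phi> \<in> F \<Longrightarrow> \<phi> y \<le> norm y"
  using nrm[of y] finF by (simp add: Max_ge)

lemma ex_act: "\<exists>\<phi>\<in>F. \<phi> y = norm y"
proof -
  have "Max ((\<lambda>\<phi>. \<phi> y) ` F) \<in> (\<lambda>\<phi>. \<phi> y) ` F" using finF neF by (intro Max_in) auto
  then show ?thesis using nrm[of y] by auto
qed

lemma act_ne: "act y \<noteq> {}" using ex_act by (auto simp: act_def)

lemma finite_act: "finite (act y)" using finF by (simp add: act_def)

lemma abs_le: "\<phi> \<in> F \<Longrightarrow> \<bar>\<phi> y\<bar> \<le> norm y"
proof -
  assume p: "\<phi> \<in> F"
  have "\<phi> (-y) = - \<phi> y" using linF[OF p] by (simp add: linear_neg)
  then show ?thesis using le_norm[OF p, of y] le_norm[OF p, of "-y"] by auto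
qed

lemma bl:
  assumes p: "\<phi> \<in> F" shows "bounded_linear \<phi>"
proof (rule bounded_linear_intro[where K=1])
  have l: "linear \<phi>" by (rule linF[OF p])
  show "\<phi> (x + y) = \<phi> x + \<phi> y" for x y by (rule linear_add[OF l])
  show "\<phi> (r *\<^sub>R x) = r *\<^sub>R \<phi> x" for r x by (rule linear_scale[OF l])
  show "norm (\<phi> x) \<le> norm x * 1" for x using abs_le[OF p, of x] by simp
qed

lemma inJ:
  assumes p: "\<phi> \<in> F" and a: "\<phi> y = norm y" and y: "y \<noteq> 0"
  shows "\<phi> \<in> Jset y"
proof -
  have o1: "onorm \<phi> \<le> 1"
    by (rule onorm_bound) (use abs_le[OF p] in auto)
  have "norm (\<phi> y) \<le> onorm \<phi> * norm y" by (rule onorm[OF bl[OF p]])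
  then have "norm y \<le> onorm \<phi> * norm y" using a by simp
  then have "1 \<le> onorm \<phi>" using y by simp
  then show ?thesis using o1 a bl[OF p] by (simp add: Jset_def)
qed

lemma U_act: "U z \<phi> \<Longrightarrow> act z = {\<phi>}"
proof -
  assume u: "U z \<phi>"
  obtain \<theta> where c: "\<theta> \<in> F" "\<theta> z = norm z" using ex_act by blast
  have "\<theta> = \<phi>"
  proof (rule ccontr)
    assume "\<theta> \<noteq> \<phi>"
    then have "\<theta> z < \<phi> z" using u c(1) by (auto simp: U_def)
    moreover have "\<phi> \<in> F" using u by (simp add: U_def)
    then have "\<phi> z \<le> norm z" by (rule le_norm)
    ultimately show False using c(2) by linarith
  qed
  then have pa: "\<phi> z = norm z" using c by simp
  show ?thesis
  proof
    show "act z \<subseteq> {\<phi>}"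
    proof
      fix \<psi> assume "\<psi> \<in> act z"
      then have ps: "\<psi> \<in> F" "\<psi> z = norm z" by (auto simp: act_def)
      show "\<psi> \<in> {\<phi>}"
      proof (rule ccontr)
        assume "\<psi> \<notin> {\<phi>}"
        then have "\<psi> z < \<phi> z" using u ps(1) by (auto simp: U_def)
        then show False using pa ps(2) by simp
      qed
    qed
    show "{\<phi>} \<subseteq> act z" using u pa by (auto simp: U_def act_def)
  qed
qed

lemma U_val: "U z \<phi> \<Longrightarrow> \<phi> z = norm z"
  using U_act by (auto simp: act_def)

lemma act_U: "act z = {\<phi>} \<Longrightarrow> U z \<phi>"
proof -
  assume a: "act z = {\<phi>}"
  then have p: "\<phi> \<in> F" "\<phi> z = norm z" by (auto simp: act_def)
  have "\<theta> z < \<phi> z" if "\<theta> \<in> F" "\<theta> \<noteq> \<phi>" for \<theta>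
  proof -
    have "\<theta> \<notin> act z" using a that by auto
    then show ?thesis using that le_norm[of \<theta> z] p by (auto simp: act_def)
  qed
  then show ?thesis using p by (auto simp: U_def)
qed

lemma U_ev:
  assumes "U z \<phi>"
  shows "eventually (\<lambda>s. U (z + s *\<^sub>R d) \<phi>) (at_right 0)"
proof -
  have "eventually (\<lambda>s. \<forall>\<theta>\<in>F-{\<phi>}. 0 < (\<phi> z - \<theta> z) + s * (\<phi> d - \<theta> d)) (at_right 0)"
    using finF assms by (intro eventually_ball_finite ballI ev_lin) (auto simp: U_def)
  then show ?thesis
  proof eventually_elim
    case (elim s)
    have "\<theta> (z + s *\<^sub>R d) < \<phi> (z + s *\<^sub>R d)" if "\<theta> \<in> F-{\<phi>}" for \<theta>
    proof -
      have "\<theta> \<in> F" using that by auto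
      then have "\<theta> (z + s *\<^sub>R d) = \<theta> z + s * \<theta> d" "\<phi> (z + s *\<^sub>R d) = \<phi> z + s * \<phi> d"
        using linF assms by (auto simp: U_def linear_add linear_scale)
      then show ?thesis using elim that by (auto simp: algebra_simps)
    qed
    then show ?case using assms by (auto simp: U_def)
  qed
qed

lemma smooth_unique:
  assumes "y \<noteq> 0" "smooth_point y" "\<phi>1 \<in> act y" "\<phi>2 \<in> act y"
  shows "\<phi>1 = \<phi>2"
  using assms inJ unfolding smooth_point_def act_def by blast

lemma nonsmooth_two:
  assumes y: "y \<noteq> 0" and ns: "\<not> smooth_point y"
  shows "\<exists>\<phi>1\<in>act y. \<exists>\<phi>2\<in>act y. \<phi>1 \<noteq> \<phi>2"
proof (rule ccontr)
  assume "\<not> ?thesis"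
  then have nt: "\<And>a b. a \<in> act y \<Longrightarrow> b \<in> act y \<Longrightarrow> a = b" by blast
  obtain \<phi> where "\<phi> \<in> act y" using act_ne by blast
  then have a: "act y = {\<phi>}" using nt by blast
  have u: "U y \<phi>" using act_U[OF a] .
  have p: "\<phi> \<in> F" "\<phi> y = norm y" using a by (auto simp: act_def)
  have J: "\<phi> \<in> Jset y" using inJ p y by blast
  have "f = \<phi>" if f: "f \<in> Jset y" for f
  proof
    fix w
    have fb: "bounded_linear f" "onorm f = 1" "f y = norm y" using f by (auto simp: Jset_def)
    have fle: "f v \<le> norm v" for v
      using onorm[OF fb(1), of v] fb(2) by simp
    have half: "f d \<le> \<phi> d" for d
    proof -
      obtain s where s: "s > 0" "U (y + s *\<^sub>R d) \<phi>" using ex_pos_at_right[OF U_ev[OF u]] by blast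
      have "f (y + s *\<^sub>R d) \<le> \<phi> (y + s *\<^sub>R d)"
        using fle[of "y + s *\<^sub>R d"] U_val[OF s(2)] by simp
      then have "f y + s * f d \<le> \<phi> y + s * \<phi> d"
        using linF[OF p(1)] bounded_linear.linear[OF fb(1)] by (simp add: linear_add linear_scale)
      then have "s * f d \<le> s * \<phi> d" using fb(3) p(2) by simp
      then show ?thesis using s(1) by simp
    qed
    have "f (-w) \<le> \<phi> (-w)" by (rule half)
    then have "f w \<ge> \<phi> w"
      using linF[OF p(1)] bounded_linear.linear[OF fb(1)] by (simp add: linear_neg)
    then show "f w = \<phi> w" using half[of w] by simp
  qed
  then have "smooth_point y" using J unfolding smooth_point_def by blast
  then show False using ns by simp
qed

lemma TEA_iff: "TEA_pair y w \<longleftrightarrow> act y \<inter> act w \<noteq> {}"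
proof
  assume t: "TEA_pair y w"
  obtain \<phi> where p: "\<phi> \<in> F" "\<phi> (y + w) = norm (y + w)" using ex_act by blast
  have "\<phi> y + \<phi> w = norm y + norm w" using p t linF[OF p(1)] by (simp add: TEA_pair_def linear_add)
  then have "\<phi> y = norm y" "\<phi> w = norm w" using le_norm[OF p(1), of y] le_norm[OF p(1), of w] by linarith+
  then show "act y \<inter> act w \<noteq> {}" using p(1) by (auto simp: act_def)
next
  assume "act y \<inter> act w \<noteq> {}"
  then obtain \<phi> where p: "\<phi> \<in> F" "\<phi> y = norm y" "\<phi> w = norm w" by (auto simp: act_def)
  have "\<phi> (y + w) = norm y + norm w" using p linF[OF p(1)] by (simp add: linear_add)
  then have "norm y + norm w \<le> norm (y + w)" using le_norm[OF p(1), of "y+w"] by simp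
  then show "TEA_pair y w" using norm_triangle_ineq[of y w] by (simp add: TEA_pair_def)
qed


lemma generic:
  assumes T: "linear T" "bij T" and u0: "U z0 \<phi>"
  shows "\<exists>z g. U z \<phi> \<and> U (T z) g"
proof -
  have "\<forall>z. U z \<phi> \<and> card (act (T z)) = n \<longrightarrow> (\<exists>z g. U z \<phi> \<and> U (T z) g)" for n
  proof (induction n rule: less_induct)
    case (less n)
    show ?case
    proof (intro allI impI)
      fix z assume h: "U z \<phi> \<and> card (act (T z)) = n"
      show "\<exists>z g. U z \<phi> \<and> U (T z) g"
      proof (cases "\<exists>g. act (T z) = {g}")
        case True
        then obtain g where "act (T z) = {g}" by blast
        then show ?thesis using h act_U by blast
      next
        case False
        obtain g1 where g1: "g1 \<in> act (T z)" using act_ne by blast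
        obtain g2 where g2: "g2 \<in> act (T z)" "g2 \<noteq> g1"
          using False g1 by blast
        obtain v where v: "g1 v \<noteq> g2 v" using g2(2) by (metis ext)
        obtain h1 h2 where hh: "h1 \<in> act (T z)" "h2 \<in> act (T z)" "h2 v < h1 v"
        proof (cases "g1 v < g2 v")
          case True then show ?thesis using that g1 g2 by blast
        next
          case False then have "g2 v < g1 v" using v by linarith
          then show ?thesis using that g1 g2 by blast
        qed
        have h1F: "h1 \<in> F" "h1 (T z) = norm (T z)" using hh(1) by (auto simp: act_def)
        have h2F: "h2 \<in> F" "h2 (T z) = norm (T z)" using hh(2) by (auto simp: act_def)
        define d where "d = inv T v"
        have Td: "T d = v" unfolding d_def using T(2) by (simp add: bij_def surj_f_inv_f)
        have ev1: "eventually (\<lambda>s. U (z + s *\<^sub>R d) \<phi>) (at_right 0)" using U_ev h by blast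
        have ev2: "eventually (\<lambda>s. \<forall>\<theta>\<in>F. (\<theta> \<notin> act (T z) \<or> \<theta> = h2) \<longrightarrow>
            0 < (h1 (T z) - \<theta> (T z)) + s * (h1 v - \<theta> v)) (at_right 0)"
        proof (rule eventually_ball_finite[OF finF], rule ballI)
          fix \<theta> assume th: "\<theta> \<in> F"
          show "eventually (\<lambda>s. (\<theta> \<notin> act (T z) \<or> \<theta> = h2) \<longrightarrow>
            0 < (h1 (T z) - \<theta> (T z)) + s * (h1 v - \<theta> v)) (at_right 0)"
          proof (cases "\<theta> \<notin> act (T z) \<or> \<theta> = h2")
            case True
            have "h1 (T z) - \<theta> (T z) > 0 \<or> (h1 (T z) - \<theta> (T z) = 0 \<and> h1 v - \<theta> v > 0)"
            proof (cases "\<theta> = h2")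
              case True then show ?thesis using h1F h2F hh(3) by simp
            next
              case False
              then have "\<theta> \<notin> act (T z)" using \<open>\<theta> \<notin> act (T z) \<or> \<theta> = h2\<close> by simp
              then have "\<theta> (T z) \<noteq> norm (T z)" using th by (simp add: act_def)
              then have "\<theta> (T z) < norm (T z)" using le_norm[OF th, of "T z"] by simp
              then show ?thesis using h1F by simp
            qed
            then show ?thesis by (rule eventually_mono[OF ev_lin]) simp
          next
            case False then show ?thesis by simp
          qed
        qed
        obtain s where s: "s > 0" "U (z + s *\<^sub>R d) \<phi>"
          "\<forall>\<theta>\<in>F. (\<theta> \<notin> act (T z) \<or> \<theta> = h2) \<longrightarrow> 0 < (h1 (T z) - \<theta> (T z)) + s * (h1 v - \<theta> v)"
          using ex_pos_at_right[OF eventually_conj[OF ev1 ev2]] by blast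
        define z' where "z' = z + s *\<^sub>R d"
        have Tz': "T z' = T z + s *\<^sub>R v" unfolding z'_def using T(1) Td by (simp add: linear_add linear_scale)
        have sub: "act (T z') \<subseteq> act (T z) - {h2}"
        proof
          fix \<theta> assume th: "\<theta> \<in> act (T z')"
          then have thF: "\<theta> \<in> F" "\<theta> (T z') = norm (T z')" by (auto simp: act_def)
          have "h1 (T z') \<le> \<theta> (T z')" using le_norm[OF h1F(1)] thF(2) by simp
          moreover have "h1 (T z') = h1 (T z) + s * h1 v" "\<theta> (T z') = \<theta> (T z) + s * \<theta> v"
            using Tz' linF[OF h1F(1)] linF[OF thF(1)] by (simp_all add: linear_add linear_scale)
          ultimately have "\<not> (0 < (h1 (T z) - \<theta> (T z)) + s * (h1 v - \<theta> v))"
            by (simp add: algebra_simps)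
          then have "\<not> (\<theta> \<notin> act (T z) \<or> \<theta> = h2)" using s(3) thF(1) by blast
          then show "\<theta> \<in> act (T z) - {h2}" by simp
        qed
        have "card (act (T z')) < card (act (T z))"
          by (rule psubset_card_mono[OF finite_act]) (use sub hh(2) in blast)
        then have "card (act (T z')) < n" using h by simp
        moreover have "U z' \<phi>" using s(2) z'_def by simp
        ultimately show ?thesis using less by blast
      qed
    qed
  qed
  then show ?thesis using u0 by blast
qed

lemma key_TEA:
  assumes pT: "preserves_TEA T" and uz: "U z \<phi>" and ug: "U (T z) g" and pu: "\<phi> u = norm u"
  shows "g (T u) = norm (T u)"
proof -
  have "\<phi> \<in> act z \<inter> act u" using uz U_val[OF uz] pu by (auto simp: act_def U_def)
  then have "TEA_pair z u" using TEA_iff by blast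
  then have "TEA_pair (T z) (T u)" using pT by (simp add: preserves_TEA_def)
  then have "act (T z) \<inter> act (T u) \<noteq> {}" using TEA_iff by blast
  then have "g \<in> act (T u)" using U_act[OF ug] by auto
  then show ?thesis by (simp add: act_def)
qed

lemma key_par:
  assumes T: "linear T" "inj T" and pT: "preserves_parallel T"
    and two: "a \<in> F" "b \<in> F" "a \<noteq> b"
    and uz: "U z \<phi>" and ug: "U (T z) g" and pu: "\<phi> u = norm u"
  shows "g (T u) = norm (T u)"
proof -
  have pF: "\<phi> \<in> F" and gF: "g \<in> F" using uz ug by (auto simp: U_def)
  have pz: "\<phi> z = norm z" using U_val[OF uz] .
  have gz: "g (T z) = norm (T z)" using U_val[OF ug] .
  have P1: "\<bar>g (T w)\<bar> = norm (T w)" if pw: "\<phi> w = norm w" for w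
  proof -
    have "\<phi> \<in> act z \<inter> act w" using pF pz pw by (auto simp: act_def)
    then have "TEA_pair z w" using TEA_iff by blast
    then have "parallel_pair z w" unfolding parallel_pair_def TEA_pair_def
      by (intro exI[of _ 1]) simp
    then have "parallel_pair (T z) (T w)" using pT by (simp add: preserves_parallel_def)
    then obtain c :: real where c: "\<bar>c\<bar> = 1" "norm (T z + c *\<^sub>R T w) = norm (T z) + norm (T w)"
      unfolding parallel_pair_def by blast
    have "norm (c *\<^sub>R T w) = norm (T w)" using c(1) by simp
    then have "TEA_pair (T z) (c *\<^sub>R T w)" using c(2) by (simp add: TEA_pair_def)
    then have "act (T z) \<inter> act (c *\<^sub>R T w) \<noteq> {}" using TEA_iff by blast
    then have "g \<in> act (c *\<^sub>R T w)" using U_act[OF ug] by auto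
    then have "g (c *\<^sub>R T w) = norm (T w)" using c(1) by (simp add: act_def)
    then have "c * g (T w) = norm (T w)" using linF[OF gF] by (simp add: linear_scale)
    then have "\<bar>c * g (T w)\<bar> = norm (T w)" by simp
    then show ?thesis using c(1) by (simp add: abs_mult)
  qed
  show ?thesis
  proof (rule ccontr)
    assume ne: "g (T u) \<noteq> norm (T u)"
    then have gu: "g (T u) = - norm (T u)" using P1[OF pu] by (cases "g (T u) \<ge> 0") auto
    have Tu0: "T u \<noteq> 0"
    proof
      assume "T u = 0"
      then show False using ne linear_0[OF linF[OF gF]] by simp
    qed
    have z0: "z \<noteq> 0"
    proof
      assume "z = 0"
      obtain c where "c \<in> F" "c \<noteq> \<phi>" using two by blast
      then have "c 0 < \<phi> 0" using uz \<open>z = 0\<close> by (auto simp: U_def)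
      then show False using linear_0[OF linF[OF pF]] linear_0[OF linF[OF \<open>c \<in> F\<close>]] by simp
    qed
    have T0: "T 0 = 0" using linear_0[OF T(1)] .
    have Tz0: "T z \<noteq> 0" using z0 T(2) T0 by (metis inj_eq)
    define l where "l = norm (T u) / norm (T z)"
    have lpos: "l > 0" using Tu0 Tz0 by (simp add: l_def)
    define u' where "u' = u + l *\<^sub>R z"
    have pu': "\<phi> u' = norm u + l * norm z" unfolding u'_def using linF[OF pF] pu pz
      by (simp add: linear_add linear_scale)
    have "norm u' \<le> norm u + l * norm z" unfolding u'_def using lpos
      using norm_triangle_ineq[of u "l *\<^sub>R z"] lpos by simp
    then have "\<phi> u' = norm u'" using pu' le_norm[OF pF, of u'] by simp
    then have a1: "\<bar>g (T u')\<bar> = norm (T u')" by (rule P1)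
    have "g (T u') = g (T u) + l * g (T z)" unfolding u'_def
      using linF[OF gF] T(1) by (simp add: linear_add linear_scale)
    also have "\<dots> = 0" using gu gz Tz0 by (simp add: l_def)
    finally have "T u' = 0" using a1 by simp
    then have "u' = 0" using T(2) T0 by (metis inj_eq)
    then have "norm u + l * norm z = 0" using pu' linear_0[OF linF[OF pF]] by simp
    moreover have "l * norm z > 0" using lpos z0 by simp
    ultimately show False by (smt (verit) norm_ge_zero)
  qed
qed

lemma counting:
  assumes T: "linear T" "bij T"
    and key: "\<And>z u \<phi> g. U z \<phi> \<Longrightarrow> U (T z) g \<Longrightarrow> \<phi> u = norm u \<Longrightarrow> g (T u) = norm (T u)"
    and irr: "\<forall>\<phi>\<in>F. \<exists>y. U y \<phi>"
    and x: "\<phi>1 \<in> act x" "\<phi>2 \<in> act x" "\<phi>1 \<noteq> \<phi>2" and Tx: "act (T x) = {\<psi>}"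
  shows False
proof -
  have "\<forall>\<phi>\<in>F. \<exists>g. \<exists>z. U z \<phi> \<and> U (T z) g"
  proof
    fix \<phi> assume "\<phi> \<in> F"
    then obtain y where "U y \<phi>" using irr by blast
    then obtain z g where "U z \<phi>" "U (T z) g" using generic[OF T] by blast
    then show "\<exists>g. \<exists>z. U z \<phi> \<and> U (T z) g" by blast
  qed
  then have "\<exists>\<sigma>. \<forall>\<phi>\<in>F. \<exists>z. U z \<phi> \<and> U (T z) (\<sigma> \<phi>)" by (rule bchoice)
  then obtain \<sigma> where \<sigma>: "\<forall>\<phi>\<in>F. \<exists>z. U z \<phi> \<and> U (T z) (\<sigma> \<phi>)" by (rule exE)
  have \<sigma>F: "\<sigma> \<phi> \<in> F" if "\<phi> \<in> F" for \<phi>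
  proof -
    have "\<exists>z. U z \<phi> \<and> U (T z) (\<sigma> \<phi>)" using \<sigma> that by (rule bspec)
    then obtain z where "U z \<phi> \<and> U (T z) (\<sigma> \<phi>)" by (rule exE)
    then show ?thesis by (simp add: U_def)
  qed
  have sprop: "\<sigma> \<phi> (T u) = norm (T u)" if "\<phi> \<in> F" "\<phi> u = norm u" for \<phi> u
  proof -
    have "\<exists>z. U z \<phi> \<and> U (T z) (\<sigma> \<phi>)" using \<sigma> that(1) by (rule bspec)
    then obtain z where "U z \<phi> \<and> U (T z) (\<sigma> \<phi>)" by (rule exE)
    then show ?thesis using key[of z \<phi> "\<sigma> \<phi>" u] that(2) by simp
  qed
  have p1: "\<phi>1 \<in> F" "\<phi>1 x = norm x" and p2: "\<phi>2 \<in> F" "\<phi>2 x = norm x" using x by (auto simp: act_def)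
  have "\<sigma> \<phi>1 \<in> act (T x)" using sprop[OF p1] \<sigma>F[OF p1(1)] by (simp add: act_def)
  moreover have "\<sigma> \<phi>2 \<in> act (T x)" using sprop[OF p2] \<sigma>F[OF p2(1)] by (simp add: act_def)
  ultimately have "\<sigma> \<phi>1 = \<sigma> \<phi>2" using Tx by simp
  then have ninj: "\<not> inj_on \<sigma> F" using x(3) p1(1) p2(1) by (meson inj_onD)
  have "\<not> F \<subseteq> \<sigma> ` F" using ninj finite_surj_inj[OF finF] by blast
  then obtain g where g: "g \<in> F" "g \<notin> \<sigma> ` F" by blast
  obtain y where y: "U y g" using irr g(1) by blast
  define u where "u = inv T y"
  have Tu: "T u = y" unfolding u_def using T(2) by (simp add: bij_def surj_f_inv_f)
  obtain \<phi> where p: "\<phi> \<in> F" "\<phi> u = norm u" using ex_act by blast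
  have "\<sigma> \<phi> \<in> act y" using sprop[OF p] \<sigma>F[OF p(1)] Tu by (simp add: act_def)
  then have "\<sigma> \<phi> = g" using U_act[OF y] by simp
  then show False using g(2) p(1) by blast
qed

end


lemma prune:
  fixes F :: "('a::real_normed_vector \<Rightarrow> real) set"
  assumes fin: "finite F" and ne: "F \<noteq> {}" and nr: "\<forall>y. norm y = Max ((\<lambda>\<phi>. \<phi> y) ` F)"
  shows "\<exists>G. G \<subseteq> F \<and> G \<noteq> {} \<and> (\<forall>y. norm y = Max ((\<lambda>\<phi>. \<phi> y) ` G)) \<and>
           (\<forall>\<phi>\<in>G. \<exists>y. \<forall>\<theta>\<in>G-{\<phi>}. \<theta> y < \<phi> y)"
proof -
  define P where "P G \<longleftrightarrow> G \<subseteq> F \<and> G \<noteq> {} \<and> (\<forall>y. norm y = Max ((\<lambda>\<phi>. \<phi> y) ` G))" for G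
  define I where "I G \<longleftrightarrow> (\<forall>\<phi>\<in>G. \<exists>y. \<forall>\<theta>\<in>G-{\<phi>}. \<theta> y < \<phi> y)" for G :: "('a \<Rightarrow> real) set"
  have main: "\<forall>G. P G \<and> card G = n \<longrightarrow> (\<exists>G'. P G' \<and> I G')" for n
  proof (induction n rule: less_induct)
    case (less n)
    show ?case
    proof (intro allI impI)
      fix G assume G: "P G \<and> card G = n"
      have fG: "finite G" using G fin finite_subset unfolding P_def by blast
      show "\<exists>G'. P G' \<and> I G'"
      proof (cases "I G")
        case True then show ?thesis using G by blast
      next
        case False
        then obtain \<phi> where \<phi>1: "\<phi> \<in> G" and \<phi>2: "\<And>y. \<exists>\<theta>\<in>G-{\<phi>}. \<phi> y \<le> \<theta> y"
          unfolding I_def by (meson not_less)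
        define G' where "G' = G - {\<phi>}"
        have fG': "finite G'" using fG by (simp add: G'_def)
        have ne': "G' \<noteq> {}" using \<phi>2[of 0] by (auto simp: G'_def)
        have mx: "Max ((\<lambda>\<psi>. \<psi> y) ` G) = Max ((\<lambda>\<psi>. \<psi> y) ` G')" for y
        proof -
          have eq: "(\<lambda>\<psi>. \<psi> y) ` G = insert (\<phi> y) ((\<lambda>\<psi>. \<psi> y) ` G')"
            using \<phi>1 by (auto simp: G'_def)
          obtain \<theta> where th: "\<theta> \<in> G'" "\<phi> y \<le> \<theta> y" using \<phi>2[of y] by (auto simp: G'_def)
          have "\<theta> y \<le> Max ((\<lambda>\<psi>. \<psi> y) ` G')" using fG' th(1) by (intro Max_ge) auto
          then have "\<phi> y \<le> Max ((\<lambda>\<psi>. \<psi> y) ` G')" using th(2) by linarith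
          moreover have "Max (insert (\<phi> y) ((\<lambda>\<psi>. \<psi> y) ` G')) = max (\<phi> y) (Max ((\<lambda>\<psi>. \<psi> y) ` G'))"
            using fG' ne' by (intro Max_insert) auto
          ultimately show ?thesis unfolding eq by simp
        qed
        have "P G'" using G ne' mx unfolding P_def G'_def by auto
        moreover have "card G' < card G" unfolding G'_def by (rule card_Diff1_less[OF fG \<phi>1])
        then have "card G' < n" using G by simp
        ultimately show ?thesis using less by blast
      qed
    qed
  qed
  have "P F" using ne nr by (simp add: P_def)
  then obtain G' where "P G'" "I G'" using main by blast
  then show ?thesis unfolding P_def I_def by blast
qed

theorem mainTheorem18:
  fixes T :: "'a::banach \<Rightarrow> 'a"
  assumes "fin_dim_space TYPE('a)"
    and "polyhedral_space TYPE('a)"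
    and "bounded_linear T" and "bij T"
    and "preserves_parallel T \<or> preserves_TEA T"
    and "x \<noteq> 0" and "\<not> smooth_point x"
  shows "\<not> smooth_point (T x)"
proof
  assume sm: "smooth_point (T x)"
  have linT: "linear T" using assms(3) bounded_linear.linear by blast
  have injT: "inj T" using assms(4) bij_is_inj by blast
  obtain F0 :: "('a \<Rightarrow> real) set" where F0: "finite F0" "F0 \<noteq> {}" "\<forall>\<phi>\<in>F0. linear \<phi>"
      "\<forall>y. norm y = Max ((\<lambda>\<phi>. \<phi> y) ` F0)"
    using poly_rep[OF assms(1,2,6)] by blast
  obtain G where G: "G \<subseteq> F0" "G \<noteq> {}" "\<forall>y. norm y = Max ((\<lambda>\<phi>. \<phi> y) ` G)"
      "\<forall>\<phi>\<in>G. \<exists>y. \<forall>\<theta>\<in>G-{\<phi>}. \<theta> y < \<phi> y"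
    using prune[OF F0(1,2,4)] by blast
  have i1: "finite G" using G(1) F0(1) finite_subset by blast
  have i3: "\<And>\<phi>. \<phi> \<in> G \<Longrightarrow> linear \<phi>" using G(1) F0(3) by blast
  have i4: "\<And>y. norm y = Max ((\<lambda>\<phi>. \<phi> y) ` G)" using G(3) by blast
  interpret nrep G by (rule nrep.intro[OF i1 G(2) i3 i4])
  have irr: "\<forall>\<phi>\<in>G. \<exists>y. U y \<phi>" using G(4) by (simp add: U_def)
  obtain \<phi>1 \<phi>2 where ph: "\<phi>1 \<in> act x" "\<phi>2 \<in> act x" "\<phi>1 \<noteq> \<phi>2"
    using nonsmooth_two[OF assms(6,7)] by blast
  have ph1: "\<phi>1 \<in> G" "\<phi>2 \<in> G" using ph by (auto simp: act_def)
  have T0: "T 0 = 0" using linear_0[OF linT] .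
  have Tx0: "T x \<noteq> 0" using assms(6) injT T0 by (metis inj_eq)
  obtain \<psi> where psi: "\<psi> \<in> act (T x)" using act_ne by blast
  have Tx: "act (T x) = {\<psi>}"
  proof
    show "act (T x) \<subseteq> {\<psi>}" using smooth_unique[OF Tx0 sm _ psi] by blast
    show "{\<psi>} \<subseteq> act (T x)" using psi by blast
  qed
  have key: "g (T u) = norm (T u)" if "U z \<phi>" "U (T z) g" "\<phi> u = norm u" for z u \<phi> g
  proof (cases "preserves_parallel T")
    case True
    show ?thesis by (rule key_par[OF linT injT True ph1(1) ph1(2) ph(3) that])
  next
    case False
    then have "preserves_TEA T" using assms(5) by blast
    show ?thesis by (rule key_TEA[OF \<open>preserves_TEA T\<close> that])
  qed
  show False
    apply (rule counting[where T=T and x=x])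
           apply (rule linT)
          apply (rule assms(4))
         apply (rule key; assumption)
        apply (rule irr)
       apply (rule ph(1))
      apply (rule ph(2))
     apply (rule ph(3))
    apply (rule Tx)
    done
qed

end
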